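(* Let $F$ and $G$ be Fourier matrices of the same size $N$, with indexing groups $I_F$ and $I_G$, and let $\chi',\chi'':I_G\to I_F$ be bijections. If $P_{\chi'}\,F\,P_{\chi''}^T=G$, then $\chi'$ and $\chi''$ are group isomorphisms.
   Context: For $n\ge1$, $F_n$ is the $n\times n$ matrix with rows and columns indexed by $\mathbb Z_n$ and entries $(F_n)_{i,j}=e^{2\pi i\,\tilde i\tilde j/n}$ ($\tilde i,\tilde j$ any integer representatives). A Fourier matrix is $F=F_{N_1}\otimes\cdots\otimes F_{N_r}$ of size $N=N_1\cdots N_r$, indexed by its indexing group $I_F=\mathbb Z_{N_1}\times\cdots\times\mathbb Z_{N_r}$: for $i=(i_1,\dots,i_r),j=(j_1,\dots,j_r)\in I_F$, $F_{i,j}=\prod_x (F_{N_x})_{i_x,j_x}$, and group index $i$ corresponds to the position of $i$ in the lexicographic order of $I_F$. For Fourier matrices $F,G$ of size $N$ and a bijection $\varphi:I_G\to I_F$, $P_\varphi$ is the $N\times N$ permutation matrix whose rows are indexed by $I_G$ and columns by $I_F$, with $(P_\varphi)_{i,\varphi(i)}=1$ for all $i\in I_G$ and zeros elsewhere. *)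

theory Defs
  imports Complex_Main "HOL-Algebra.Group"
begin

text \<open>An indexing group Z_{N_1} x ... x Z_{N_r} is described by the list Ns = [N_1,...,N_r]
  (all N_x \<ge> 1). Its elements are the nat lists i of length r with i!x < N_x.\<close>

definition idx_set :: "nat list \<Rightarrow> nat list set" where
  "idx_set Ns = {i. length i = length Ns \<and> (\<forall>x<length Ns. i ! x < Ns ! x)}"

definition idx_group :: "nat list \<Rightarrow> nat list monoid" where
  "idx_group Ns = \<lparr> carrier = idx_set Ns,
      mult = (\<lambda>i j. map (\<lambda>x. (i ! x + j ! x) mod (Ns ! x)) [0..<length Ns]),
      one = replicate (length Ns) 0 \<rparr>"

definition valid_sizes :: "nat list \<Rightarrow> bool" where
  "valid_sizes Ns \<longleftrightarrow> (\<forall>x\<in>set Ns. 1 \<le> x)"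

text \<open>Matrices are functions of row and column index; F is the Fourier matrix
  F_{N_1} \<otimes> ... \<otimes> F_{N_r} indexed by its indexing group.\<close>

definition fourier :: "nat list \<Rightarrow> nat list \<Rightarrow> nat list \<Rightarrow> complex" where
  "fourier Ns i j = (\<Prod>x<length Ns.
      exp (2 * of_real pi * \<i> * of_nat (i ! x) * of_nat (j ! x) / of_nat (Ns ! x)))"

definition perm_mat :: "('a \<Rightarrow> 'b) \<Rightarrow> 'a \<Rightarrow> 'b \<Rightarrow> complex" where
  "perm_mat \<phi> i j = (if j = \<phi> i then 1 else 0)"

definition mat_transpose :: "('a \<Rightarrow> 'b \<Rightarrow> complex) \<Rightarrow> 'b \<Rightarrow> 'a \<Rightarrow> complex" where
  "mat_transpose A i j = A j i"

definition mat_mult :: "'b set \<Rightarrow> ('a \<Rightarrow> 'b \<Rightarrow> complex) \<Rightarrow> ('b \<Rightarrow> 'c \<Rightarrow> complex) \<Rightarrow> 'a \<Rightarrow> 'c \<Rightarrow> complex" where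
  "mat_mult K A B i k = (\<Sum>j\<in>K. A i j * B j k)"

end

theory Submission
  imports Defs "HOL-Analysis.Analysis"
begin

lemma exp_mod_factor:
  assumes "(N::nat) \<ge> 1"
  shows "exp (2 * of_real pi * \<i> * of_nat (a mod N) * of_nat y / of_nat N)
       = exp (2 * of_real pi * \<i> * of_nat a * of_nat y / of_nat N)"
proof -
  have a: "(of_nat a::complex) = of_nat (a mod N) + of_nat N * of_nat (a div N)"
    by (metis mod_mult_div_eq of_nat_add of_nat_mult add.commute)
  have "2 * of_real pi * \<i> * of_nat a * of_nat y / of_nat N
     = 2 * of_real pi * \<i> * of_nat (a mod N) * of_nat y / of_nat N
       + \<i> * (of_nat (a div N * y) * (of_real pi * 2))"
    using assms by (subst a) (simp add: field_simps)
  then show ?thesis by (simp only: exp_add exp_2pi_1_nat mult_1_right)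
qed

lemma exp_frac_inj:
  assumes "a < (N::nat)" "b < N"
    and "exp (2 * of_real pi * \<i> * of_nat a / of_nat N) = exp (2 * of_real pi * \<i> * of_nat b / of_nat N)"
  shows "a = b"
proof -
  obtain n :: int where n: "2 * of_real pi * \<i> * of_nat a / of_nat N = 2 * of_real pi * \<i> * of_nat b / of_nat N + (of_int (2 * n) * pi) * \<i>"
    using assms(3) exp_eq by blast
  have N: "N > 0" using assms by simp
  have "(of_nat a :: complex) = of_nat b + of_int n * of_nat N"
  proof -
    have "2 * of_real pi * \<i> * of_nat a = 2 * of_real pi * \<i> * (of_nat b + of_int n * of_nat N)"
      using n N by (simp add: field_simps)
    then show ?thesis by simp
  qed
  then have "int a = int b + n * int N"
    by (metis (mono_tags, opaque_lifting) of_int_eq_iff of_int_add of_int_mult of_int_of_nat_eq)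
  then have "n = 0" using assms
    by (smt (verit) mult_le_cancel_right1 mult_minus_left of_nat_less_iff mult_cancel_right2 mult_less_cancel_right2 of_nat_0_le_iff)
  then show ?thesis using \<open>int a = int b + n * int N\<close> by simp
qed


lemma finite_idx: "finite (idx_set Ns)"
proof -
  let ?B = "Max (insert 0 (set Ns))"
  have "idx_set Ns \<subseteq> {xs. set xs \<subseteq> {..?B} \<and> length xs = length Ns}"
  proof
    fix i assume i: "i \<in> idx_set Ns"
    have "set i \<subseteq> {..?B}"
    proof
      fix v assume "v \<in> set i"
      then obtain x where x: "x < length i" "i ! x = v" by (auto simp: in_set_conv_nth)
      then have "v < Ns ! x" "x < length Ns" using i by (auto simp: idx_set_def)
      moreover have "Ns ! x \<le> ?B" using \<open>x < length Ns\<close> by (intro Max_ge) auto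
      ultimately show "v \<in> {..?B}" by (metis atMost_iff le_trans less_imp_le)
    qed
    then show "i \<in> {xs. set xs \<subseteq> {..?B} \<and> length xs = length Ns}" using i by (simp add: idx_set_def)
  qed
  moreover have "finite {xs. set xs \<subseteq> {..?B} \<and> length xs = length Ns}"
    by (rule finite_lists_length_eq) simp
  ultimately show ?thesis by (rule finite_subset)
qed

lemma valid_nth: "valid_sizes Ns \<Longrightarrow> x < length Ns \<Longrightarrow> 1 \<le> Ns ! x"
  by (simp add: valid_sizes_def)

lemma mult_closed:
  assumes "valid_sizes Ns" "i \<in> idx_set Ns" "j \<in> idx_set Ns"
  shows "monoid.mult (idx_group Ns) i j \<in> idx_set Ns"
proof -
  have "\<And>x. x < length Ns \<Longrightarrow> 0 < Ns ! x" using valid_nth[OF assms(1)] by fastforce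
  then show ?thesis using assms by (auto simp: idx_group_def idx_set_def)
qed

lemma fourier_sym: "fourier Ns i j = fourier Ns j i"
  unfolding fourier_def by (simp add: mult_ac)

lemma fourier_mult:
  assumes "valid_sizes Ns"
  shows "fourier Ns (monoid.mult (idx_group Ns) i j) y = fourier Ns i y * fourier Ns j y"
  unfolding fourier_def prod.distrib[symmetric]
proof (rule prod.cong[OF refl])
  fix x assume "x \<in> {..<length Ns}"
  then have x: "x < length Ns" by simp
  have "monoid.mult (idx_group Ns) i j ! x = (i ! x + j ! x) mod Ns ! x"
    using x by (simp add: idx_group_def)
  then have "exp (2 * complex_of_real pi * \<i> * of_nat (monoid.mult (idx_group Ns) i j ! x) * of_nat (y ! x) / of_nat (Ns ! x))
     = exp (2 * complex_of_real pi * \<i> * of_nat (i ! x + j ! x) * of_nat (y ! x) / of_nat (Ns ! x))"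
    using exp_mod_factor[OF valid_nth[OF assms x]] by simp
  also have "\<dots> = exp (2 * complex_of_real pi * \<i> * of_nat (i ! x) * of_nat (y ! x) / of_nat (Ns ! x))
      * exp (2 * complex_of_real pi * \<i> * of_nat (j ! x) * of_nat (y ! x) / of_nat (Ns ! x))"
    by (simp add: exp_add[symmetric] add_divide_distrib distrib_left distrib_right)
  finally show "exp (2 * complex_of_real pi * \<i> * of_nat (monoid.mult (idx_group Ns) i j ! x) * of_nat (y ! x) / of_nat (Ns ! x))
     = exp (2 * complex_of_real pi * \<i> * of_nat (i ! x) * of_nat (y ! x) / of_nat (Ns ! x))
      * exp (2 * complex_of_real pi * \<i> * of_nat (j ! x) * of_nat (y ! x) / of_nat (Ns ! x))" .
qed

lemma fourier_unit:
  assumes "k < length Ns"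
  shows "fourier Ns x (map (\<lambda>t. if t = k then 1 else 0) [0..<length Ns])
     = exp (2 * of_real pi * \<i> * of_nat (x ! k) / of_nat (Ns ! k))"
proof -
  have "fourier Ns x (map (\<lambda>t. if t = k then 1 else 0) [0..<length Ns])
     = (\<Prod>t<length Ns. if t = k then exp (2 * of_real pi * \<i> * of_nat (x ! k) / of_nat (Ns ! k)) else 1)"
    unfolding fourier_def by (rule prod.cong) auto
  also have "\<dots> = exp (2 * of_real pi * \<i> * of_nat (x ! k) / of_nat (Ns ! k))"
    using assms by (subst prod.delta) auto
  finally show ?thesis .
qed

lemma separation:
  assumes "valid_sizes Ns" "x \<in> idx_set Ns" "x' \<in> idx_set Ns"
    and eq: "\<And>y. y \<in> idx_set Ns \<Longrightarrow> fourier Ns x y = fourier Ns x' y"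
  shows "x = x'"
proof (rule nth_equalityI)
  show "length x = length x'" using assms by (simp add: idx_set_def)
  fix k assume "k < length x"
  then have k: "k < length Ns" using assms by (simp add: idx_set_def)
  have xk: "x ! k < Ns ! k" "x' ! k < Ns ! k" using assms k by (auto simp: idx_set_def)
  show "x ! k = x' ! k"
  proof (cases "Ns ! k = 1")
    case True then show ?thesis using xk by simp
  next
    case False
    then have "Ns ! k \<ge> 2" using valid_nth[OF assms(1) k] by simp
    have "\<And>x. x < length Ns \<Longrightarrow> 0 < Ns ! x" using valid_nth[OF assms(1)] by fastforce
    then have "map (\<lambda>t. if t = k then 1 else 0) [0..<length Ns] \<in> idx_set Ns"
      using \<open>Ns ! k \<ge> 2\<close> by (auto simp: idx_set_def)
    from eq[OF this] show ?thesis
      unfolding fourier_unit[OF k] using exp_frac_inj[OF xk] by simp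
  qed
qed

lemma matrix_simp:
  assumes "\<chi>1 a \<in> idx_set Ns" "\<chi>2 c \<in> idx_set Ns"
  shows "mat_mult (idx_set Ns) (mat_mult (idx_set Ns) (perm_mat \<chi>1) (fourier Ns))
              (mat_transpose (perm_mat \<chi>2)) a c = fourier Ns (\<chi>1 a) (\<chi>2 c)"
proof -
  have inner: "mat_mult (idx_set Ns) (perm_mat \<chi>1) (fourier Ns) a k = fourier Ns (\<chi>1 a) k" for k
  proof -
    have "mat_mult (idx_set Ns) (perm_mat \<chi>1) (fourier Ns) a k
        = (\<Sum>j\<in>idx_set Ns. if j = \<chi>1 a then fourier Ns j k else 0)"
      unfolding mat_mult_def by (rule sum.cong) (auto simp: perm_mat_def)
    then show ?thesis using assms finite_idx[of Ns] by simp
  qed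
  have "mat_mult (idx_set Ns) (mat_mult (idx_set Ns) (perm_mat \<chi>1) (fourier Ns))
              (mat_transpose (perm_mat \<chi>2)) a c
     = (\<Sum>j\<in>idx_set Ns. if j = \<chi>2 c then fourier Ns (\<chi>1 a) j else 0)"
    unfolding mat_mult_def[of _ _ "mat_transpose _"] inner
    by (rule sum.cong) (auto simp: perm_mat_def mat_transpose_def)
  then show ?thesis using assms finite_idx[of Ns] by simp
qed

lemma iso_gen:
  assumes vN: "valid_sizes Ns" and vM: "valid_sizes Ms"
    and f: "bij_betw f (idx_set Ms) (idx_set Ns)"
    and g: "bij_betw g (idx_set Ms) (idx_set Ns)"
    and H: "\<And>a c. a \<in> idx_set Ms \<Longrightarrow> c \<in> idx_set Ms \<Longrightarrow> fourier Ns (f a) (g c) = fourier Ms a c"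
  shows "f \<in> iso (idx_group Ms) (idx_group Ns)"
proof -
  have fin: "f a \<in> idx_set Ns" if "a \<in> idx_set Ms" for a
    using f that bij_betwE by blast
  have hom: "f (monoid.mult (idx_group Ms) a b) = monoid.mult (idx_group Ns) (f a) (f b)"
    if a: "a \<in> idx_set Ms" and b: "b \<in> idx_set Ms" for a b
  proof (rule separation[OF vN])
    show "f (monoid.mult (idx_group Ms) a b) \<in> idx_set Ns" using fin mult_closed[OF vM a b] by blast
    show "monoid.mult (idx_group Ns) (f a) (f b) \<in> idx_set Ns" using mult_closed[OF vN fin[OF a] fin[OF b]] .
    fix y assume y: "y \<in> idx_set Ns"
    then obtain c where c: "c \<in> idx_set Ms" "y = g c" using g by (metis bij_betw_iff_bijections)
    have "fourier Ns (f (monoid.mult (idx_group Ms) a b)) y = fourier Ms (monoid.mult (idx_group Ms) a b) c"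
      using H[OF mult_closed[OF vM a b] c(1)] c(2) by simp
    also have "\<dots> = fourier Ms a c * fourier Ms b c" by (rule fourier_mult[OF vM])
    also have "\<dots> = fourier Ns (f a) y * fourier Ns (f b) y" using H[OF a c(1)] H[OF b c(1)] c(2) by simp
    also have "\<dots> = fourier Ns (monoid.mult (idx_group Ns) (f a) (f b)) y" by (rule fourier_mult[OF vN, symmetric])
    finally show "fourier Ns (f (monoid.mult (idx_group Ms) a b)) y = fourier Ns (monoid.mult (idx_group Ns) (f a) (f b)) y" .
  qed
  show ?thesis
    unfolding iso_def hom_def using f fin hom by (auto simp: idx_group_def[of Ms] idx_group_def[of Ns])
qed

theorem lemma4p3:
  fixes Ns Ms :: "nat list" and \<chi>1 \<chi>2 :: "nat list \<Rightarrow> nat list"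
  assumes "valid_sizes Ns" and "valid_sizes Ms"
    and "prod_list Ns = prod_list Ms"
    and "bij_betw \<chi>1 (idx_set Ms) (idx_set Ns)"
    and "bij_betw \<chi>2 (idx_set Ms) (idx_set Ns)"
    and "\<forall>a\<in>idx_set Ms. \<forall>c\<in>idx_set Ms.
           mat_mult (idx_set Ns) (mat_mult (idx_set Ns) (perm_mat \<chi>1) (fourier Ns))
              (mat_transpose (perm_mat \<chi>2)) a c = fourier Ms a c"
  shows "\<chi>1 \<in> iso (idx_group Ms) (idx_group Ns) \<and> \<chi>2 \<in> iso (idx_group Ms) (idx_group Ns)"
proof -
  have H: "fourier Ns (\<chi>1 a) (\<chi>2 c) = fourier Ms a c" if "a \<in> idx_set Ms" "c \<in> idx_set Ms" for a c
    using assms(6) that matrix_simp[of \<chi>1 a Ns \<chi>2 c] assms(4,5) bij_betwE by metis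
  show ?thesis
  proof
    show "\<chi>1 \<in> iso (idx_group Ms) (idx_group Ns)"
      by (rule iso_gen[OF assms(1,2,4,5)]) (rule H)
    show "\<chi>2 \<in> iso (idx_group Ms) (idx_group Ns)"
      by (rule iso_gen[OF assms(1,2,5,4)]) (metis H fourier_sym)
  qed
qed

end
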